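(* Let $A$ be an Archimedean semiprime $f$-algebra with a multiplicative unit $e$. Then $A$ is bounded quasi-inversion closed if and only if $A$ is bounded inversion closed.
   Context: An $f$-algebra is a real associative algebra that is a vector lattice with $A_+A_+\subseteq A_+$ and such that $a\wedge b=0$ implies $ac\wedge b=ca\wedge b=0$ for all $c\in A_+$; it is semiprime if $0$ is its only nilpotent element. An element $a\in A$ is quasi-invertible if there is $a^\ast\in A$ with $a+a^\ast=aa^\ast$; $Q(A)$ denotes the set of such elements. $A$ is bounded quasi-inversion closed if for every $a\in A$, $|a|\le|a^2-a|$ implies $a\in Q(A)$. A unital $A$ is bounded inversion closed if every $a\in A$ with $e\le a$ has a multiplicative inverse in $A$. *)

theory Defs
  imports Main "HOL.Real_Vector_Spaces"
begin

text \<open>Ambient structure: a real associative unital algebra (real_algebra_1, unit e = 1)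
whose order is a lattice order compatible with the vector structure
(ordered_real_vector + lattice), i.e. a vector lattice.\<close>

definition vl_abs :: "'a::{lattice, uminus} \<Rightarrow> 'a" where
  "vl_abs a = sup a (- a)"

definition f_algebra :: "'a::{real_algebra_1, ordered_real_vector, lattice} itself \<Rightarrow> bool" where
  "f_algebra _ \<longleftrightarrow>
     (\<forall>a b::'a. 0 \<le> a \<longrightarrow> 0 \<le> b \<longrightarrow> 0 \<le> a * b) \<and>
     (\<forall>a b c::'a. inf a b = 0 \<longrightarrow> 0 \<le> c \<longrightarrow> inf (a * c) b = 0 \<and> inf (c * a) b = 0)"

definition semiprime :: "'a::{real_algebra_1, ordered_real_vector, lattice} itself \<Rightarrow> bool" where
  "semiprime _ \<longleftrightarrow> (\<forall>a::'a. (\<exists>n::nat. a ^ n = 0) \<longrightarrow> a = 0)"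

definition archimedean_vl :: "'a::{real_algebra_1, ordered_real_vector, lattice} itself \<Rightarrow> bool" where
  "archimedean_vl _ \<longleftrightarrow> (\<forall>a b::'a. 0 \<le> a \<longrightarrow> (\<forall>n::nat. real n *\<^sub>R a \<le> b) \<longrightarrow> a = 0)"

definition quasi_invertible :: "'a::{real_algebra_1} \<Rightarrow> bool" where
  "quasi_invertible a \<longleftrightarrow> (\<exists>a'. a + a' = a * a')"

definition bounded_quasi_inversion_closed ::
  "'a::{real_algebra_1, ordered_real_vector, lattice} itself \<Rightarrow> bool" where
  "bounded_quasi_inversion_closed _ \<longleftrightarrow>
     (\<forall>a::'a. vl_abs a \<le> vl_abs (a * a - a) \<longrightarrow> quasi_invertible a)"

definition bounded_inversion_closed ::
  "'a::{real_algebra_1, ordered_real_vector, lattice} itself \<Rightarrow> bool" where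
  "bounded_inversion_closed _ \<longleftrightarrow>
     (\<forall>a::'a. 1 \<le> a \<longrightarrow> (\<exists>b. a * b = 1 \<and> b * a = 1))"

end

theory Submission
  imports Defs "HOL-Library.Lattice_Algebras"
begin

interpretation L: lattice_ab_group_add "(+)" "0::'a::{ordered_ab_group_add,lattice}" "(-)" uminus "(\<le>)" "(<)" inf sup
  by unfold_locales

lemma negp_eq: "sup (- x) 0 = sup x 0 - (x::'a::{ordered_ab_group_add,lattice})"
proof -
  have "sup (- x) 0 + x = sup 0 x" by (simp add: L.add_sup_distrib_right)
  then show ?thesis by (metis add_diff_cancel sup_commute)
qed

lemma parts_disj: "inf (sup x 0) (sup (- x) 0) = (0::'a::{ordered_ab_group_add,lattice})"
proof -
  have "inf (sup x 0) (sup x 0 - x) = sup x 0 + inf 0 (- x)"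
    by (simp add: L.add_inf_distrib_left)
  also have "\<dots> = sup x 0 - sup 0 x" by (simp add: L.neg_sup_eq_inf[symmetric])
  also have "\<dots> = 0" by (simp add: sup_commute)
  finally show ?thesis by (simp add: negp_eq)
qed

lemma parts_eq: "x = sup x 0 - sup (- x) (0::'a::{ordered_ab_group_add,lattice})"
  by (simp add: negp_eq)

lemma abs_nonneg: "0 \<le> vl_abs (x::'a::{ordered_ab_group_add,lattice})"
proof -
  have "x + - x \<le> vl_abs x + vl_abs x" unfolding vl_abs_def
    by (intro add_mono) auto
  then show ?thesis by simp
qed

lemma abs_parts: "vl_abs x = sup x 0 + sup (- x) (0::'a::{ordered_ab_group_add,lattice})"
proof -
  have "sup x 0 + sup (- x) 0 = sup (sup x 0) (sup (- x) 0) + inf (sup x 0) (sup (- x) 0)"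
    by (rule L.add_eq_inf_sup)
  also have "\<dots> = sup (sup x 0) (sup (- x) 0)" by (simp add: parts_disj)
  also have "\<dots> = sup (vl_abs x) 0" unfolding vl_abs_def by (simp add: sup_aci)
  also have "\<dots> = vl_abs x" using abs_nonneg[of x] by (simp add: sup_absorb1)
  finally show ?thesis by simp
qed

lemma abs_minus: "vl_abs (- x) = vl_abs (x::'a::{ordered_ab_group_add,lattice})"
  by (simp add: vl_abs_def sup_commute)

lemma abs_ge: "x \<le> vl_abs (x::'a::{ordered_ab_group_add,lattice})"
  by (simp add: vl_abs_def)

context
  fixes T :: "'a::{real_algebra_1, ordered_real_vector, lattice} itself"
  assumes F: "f_algebra TYPE('a)"
begin

lemma pos: "0 \<le> a \<Longrightarrow> 0 \<le> b \<Longrightarrow> 0 \<le> (a::'a) * b"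
  using F unfolding f_algebra_def by blast

lemma dis: "inf a b = 0 \<Longrightarrow> 0 \<le> c \<Longrightarrow> inf (a * c) b = (0::'a) \<and> inf (c * a) b = 0"
  using F unfolding f_algebra_def by blast

lemma inf0_nonneg: "inf a b = (0::'a) \<Longrightarrow> 0 \<le> a \<and> 0 \<le> b"
  by (metis inf.cobounded1 inf.cobounded2)

lemma disR: "inf a b = 0 \<Longrightarrow> 0 \<le> c \<Longrightarrow> inf (a * c) (b * c) = (0::'a)"
proof -
  assume h: "inf a b = 0" "0 \<le> c"
  then have "inf b (a * c) = 0" using dis by (simp add: inf_commute)
  then have "inf (b * c) (a * c) = 0" using dis h(2) by blast
  then show ?thesis by (simp add: inf_commute)
qed

lemma disL: "inf a b = 0 \<Longrightarrow> 0 \<le> c \<Longrightarrow> inf (c * a) (c * b) = (0::'a)"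
proof -
  assume h: "inf a b = 0" "0 \<le> c"
  then have "inf b (c * a) = 0" using dis by (simp add: inf_commute)
  then have "inf (c * b) (c * a) = 0" using dis h(2) by blast
  then show ?thesis by (simp add: inf_commute)
qed

lemma dis_prod: "inf a b = 0 \<Longrightarrow> a * b = (0::'a)"
proof -
  assume h: "inf a b = 0"
  then have nn: "0 \<le> a" "0 \<le> b" using inf0_nonneg by auto
  have "inf (a * b) b = 0" using dis h nn by blast
  then have "inf b (a * b) = 0" by (simp add: inf_commute)
  then have "inf (a * b) (a * b) = 0" using dis nn by blast
  then show ?thesis by simp
qed

lemma sq_nonneg: "0 \<le> (x::'a) * x"
proof -
  define p where "p = sup x 0"
  define n where "n = sup (- x) 0"
  have x: "x = p - n" unfolding p_def n_def by (rule parts_eq)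
  have d: "inf p n = 0" unfolding p_def n_def by (rule parts_disj)
  have "p * n = 0" using dis_prod d by blast
  moreover have "n * p = 0" using dis_prod d by (simp add: inf_commute)
  ultimately have "x * x = p * p + n * n" unfolding x by (simp add: algebra_simps)
  moreover have "0 \<le> p" "0 \<le> n" unfolding p_def n_def by auto
  ultimately show ?thesis by (simp add: pos)
qed

lemma one_nonneg: "0 \<le> (1::'a)"
  using sq_nonneg[of 1] by simp

lemma abs_mult_le: "vl_abs ((y::'a) * z) \<le> vl_abs y * vl_abs z"
proof -
  define p where "p = sup y 0"
  define n where "n = sup (- y) 0"
  define q where "q = sup z 0"
  define m where "m = sup (- z) 0"
  have y: "y = p - n" unfolding p_def n_def by (rule parts_eq)
  have z: "z = q - m" unfolding q_def m_def by (rule parts_eq)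
  have ay: "vl_abs y = p + n" unfolding p_def n_def by (rule abs_parts)
  have az: "vl_abs z = q + m" unfolding q_def m_def by (rule abs_parts)
  have nn: "0 \<le> p" "0 \<le> n" "0 \<le> q" "0 \<le> m" unfolding p_def n_def q_def m_def by auto
  have pr: "0 \<le> p * q" "0 \<le> p * m" "0 \<le> n * q" "0 \<le> n * m" using nn pos by auto
  have e1: "y * z = p * q + n * m - p * m - n * q" unfolding y z by (simp add: algebra_simps)
  have e2: "vl_abs y * vl_abs z = p * q + n * m + p * m + n * q" unfolding ay az by (simp add: algebra_simps)
  have "y * z \<le> vl_abs y * vl_abs z" unfolding e1 e2 using pr
    by (simp add: algebra_simps add_increasing2 add_mono)
  moreover have "- (y * z) \<le> vl_abs y * vl_abs z" unfolding e1 e2 using pr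
    by (simp add: algebra_simps add_increasing2 add_mono)
  ultimately show ?thesis unfolding vl_abs_def by simp
qed

lemma ge1_cancel:
  assumes a: "1 \<le> a" and ap: "a * p = (0::'a)"
  shows "p = 0"
proof -
  define u where "u = sup p 0"
  define n where "n = sup (- p) 0"
  have pe: "p = u - n" unfolding u_def n_def by (rule parts_eq)
  have d: "inf u n = 0" unfolding u_def n_def by (rule parts_disj)
  have nn: "0 \<le> u" "0 \<le> n" unfolding u_def n_def by auto
  have a0: "0 \<le> a" using a one_nonneg by simp
  have eq: "a * u = a * n" using ap unfolding pe by (simp add: algebra_simps)
  have dd: "inf (a * u) (a * n) = 0" using disL d a0 by blast
  have au: "a * u = 0" using dd eq by simp
  have an: "a * n = 0" using au eq by simp
  have "0 \<le> (a - 1) * u" using a nn pos by simp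
  then have "u \<le> a * u" by (simp add: algebra_simps)
  then have u0: "u = 0" using au nn by simp
  have "0 \<le> (a - 1) * n" using a nn pos by simp
  then have "n \<le> a * n" by (simp add: algebra_simps)
  then have "n = 0" using an nn by simp
  then show ?thesis using pe u0 by simp
qed

end

theorem theorem2:
  assumes "f_algebra TYPE('a::{real_algebra_1, ordered_real_vector, lattice})"
    and "archimedean_vl TYPE('a)"
    and "semiprime TYPE('a)"
  shows "bounded_quasi_inversion_closed TYPE('a) \<longleftrightarrow> bounded_inversion_closed TYPE('a)"
proof
  assume Q: "bounded_quasi_inversion_closed TYPE('a)"
  show "bounded_inversion_closed TYPE('a)"
    unfolding bounded_inversion_closed_def
  proof (intro allI impI)
    fix a :: 'a
    assume a: "1 \<le> a"
    define x where "x = 1 - a"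
    have am: "0 \<le> a - 1" using a by simp
    have "1 - a \<le> 0" using a by simp
    then have "1 - a \<le> a - 1" using am by (rule order_trans)
    then have ax: "vl_abs x = a - 1" unfolding x_def vl_abs_def
      by (simp add: sup_absorb2)
    have "x * x - x = (a - 1) * (a - 1) + (a - 1)" unfolding x_def by (simp add: algebra_simps)
    moreover have "0 \<le> (a - 1) * (a - 1)" using pos[OF assms(1) am am] .
    ultimately have "a - 1 \<le> x * x - x" by simp
    then have "vl_abs x \<le> vl_abs (x * x - x)" using ax abs_ge order_trans by metis
    then have "quasi_invertible x" using Q unfolding bounded_quasi_inversion_closed_def by blast
    then obtain x' where x': "x + x' = x * x'" unfolding quasi_invertible_def by blast
    define b where "b = 1 - x'"
    have ab: "a * b = 1"
    proof -
      have "a * b = 1 - (x + x') + x * x'" unfolding b_def x_def by (simp add: algebra_simps)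
      then show ?thesis unfolding x' by simp
    qed
    have "a * (1 - b * a) = 0"
    proof -
      have "a * (1 - b * a) = a - (a * b) * a" by (simp add: algebra_simps)
      then show ?thesis using ab by simp
    qed
    then have "1 - b * a = 0" using ge1_cancel[OF assms(1) a] by blast
    then have "b * a = 1" by simp
    then show "\<exists>b. a * b = 1 \<and> b * a = 1" using ab by blast
  qed
next
  assume B: "bounded_inversion_closed TYPE('a)"
  show "bounded_quasi_inversion_closed TYPE('a)"
    unfolding bounded_quasi_inversion_closed_def
  proof (intro allI impI)
    fix a :: 'a
    assume h: "vl_abs a \<le> vl_abs (a * a - a)"
    define v where "v = 1 - a"
    define t where "t = vl_abs v"
    define b where "b = vl_abs a"
    have b0: "0 \<le> b" unfolding b_def by (rule abs_nonneg)
    have "a * a - a = - (v * a)" unfolding v_def by (simp add: algebra_simps)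
    then have "vl_abs (a * a - a) = vl_abs (v * a)" by (simp add: abs_minus)
    then have bt: "b \<le> t * b" using h abs_mult_le[OF assms(1), of v a] unfolding t_def b_def
      by simp
    define w where "w = sup (1 - t) 0"
    define z where "z = sup (- (1 - t)) 0"
    have wz: "1 - t = w - z" unfolding w_def z_def by (rule parts_eq)
    have d: "inf w z = 0" unfolding w_def z_def by (rule parts_disj)
    have w0: "0 \<le> w" "0 \<le> z" unfolding w_def z_def by auto
    have "(1 - t) * b \<le> 0" using bt by (simp add: algebra_simps)
    then have wb: "w * b \<le> z * b" unfolding wz by (simp add: algebra_simps)
    have "inf (w * b) (z * b) = 0" using disR[OF assms(1) d b0] .
    moreover have "0 \<le> w * b" using pos[OF assms(1) w0(1) b0] .
    ultimately have wb0: "w * b = 0" using wb by (metis inf.absorb1)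
    have "v \<le> t" unfolding t_def by (rule abs_ge)
    moreover have "a \<le> b" unfolding b_def by (rule abs_ge)
    ultimately have "1 - t \<le> b" unfolding v_def
      by (metis diff_le_eq add.commute le_diff_eq order_trans)
    then have wleb: "w \<le> b" unfolding w_def using b0 by simp
    have "0 \<le> w * (b - w)" using pos[OF assms(1) w0(1)] wleb by simp
    then have "w * w \<le> 0" using wb0 by (simp add: algebra_simps)
    moreover have "0 \<le> w * w" using pos[OF assms(1) w0(1) w0(1)] .
    ultimately have "w ^ 2 = 0" by (simp add: power2_eq_square)
    then have "w = 0" using assms(3) unfolding semiprime_def by blast
    then have "1 \<le> t" unfolding w_def by (metis sup.absorb_iff2 diff_le_0_iff_le)
    then obtain s where s: "t * s = 1" "s * t = 1" using B unfolding bounded_inversion_closed_def by blast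
    define p where "p = sup v 0"
    define n where "n = sup (- v) 0"
    have ve: "v = p - n" unfolding p_def n_def by (rule parts_eq)
    have te: "t = p + n" unfolding t_def p_def n_def by (rule abs_parts)
    have dn: "inf p n = 0" unfolding p_def n_def by (rule parts_disj)
    have "p * n = 0" using dis_prod[OF assms(1) dn] .
    moreover have "n * p = 0" using dis_prod[OF assms(1)] dn by (simp add: inf_commute)
    ultimately have vv: "v * v = t * t" unfolding ve te by (simp add: algebra_simps)
    define r where "r = v * s * s"
    have vr: "v * r = 1"
    proof -
      have "v * r = (v * v) * s * s" unfolding r_def by (simp add: mult.assoc)
      also have "\<dots> = t * (t * s) * s" using vv by (simp add: mult.assoc)
      also have "\<dots> = 1" using s by simp
      finally show ?thesis .
    qed
    have "a + (1 - r) = a * (1 - r)"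
      using vr unfolding v_def by (simp add: algebra_simps)
    then show "quasi_invertible a" unfolding quasi_invertible_def by blast
  qed
qed

end
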